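(* Let $M\cong\mathbb Z^d$, $\Sigma$, $v_1,\ldots,v_n$, $\mathcal A$, $D_0$, $\bar M$, $\mathbf v_0,\ldots,\mathbf v_n$, $K$ and $\Psi_{\mathbf p}$ be as in the context, with $\mathbb P_\Sigma$ nef-Fano. Then for every $\mathbf p\in K\cap\bar M$ and every $j\in\{0,1,\ldots,n\}$, $$D_j\Psi_{\mathbf p}=a_j\Psi_{\mathbf p+\mathbf v_j}$$ as formal Laurent series in $a_1,\ldots,a_n$ with coefficients in $\mathcal A$ (where $a_0=1$).
   Context: $M\cong\mathbb Z^d$ is a lattice with dual $N$; $\Sigma$ is a complete simplicial fan in $M_{\mathbb R}$ with minimal ray generators $v_1,\ldots,v_n$; $\mathbb P_\Sigma$ is assumed nef-Fano (anticanonical divisor nef); in particular every $v_i$ lies on the boundary of $\Delta=\mathrm{conv}(v_1,\ldots,v_n)$. For $k\ge0$, $A_k$ is the quotient of $\mathbb C[D_1,\ldots,D_n]$ by the linear elements $\sum_i(\lambda\cdot v_i)D_i$ ($\lambda\in N$) and the monomials $\prod_iD_i^{r_i}$ such that no cone of $\Sigma$ contains all $v_i$ with $r_i>k$. Multiplication by $\prod_iD_i^l$ defines $\mathbb C[D_1,\ldots,D_n]$-module maps $A_k\to A_{k+l}$, and $\mathcal A$ is the direct limit of the $A_k$ under these maps (a $\mathbb C[D_1,\ldots,D_n]$-module). Put $D_0=-\sum_{i=1}^nD_i$. Let $\bar M=M\oplus\mathbb Z$, $\mathbf v_i=v_i\oplus1$ for $1\le i\le n$, $\mathbf v_0=\mathbf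 0\oplus1$, and $K\subset\bar M_{\mathbb R}$ the cone spanned by $\mathbf v_0,\ldots,\mathbf v_n$. For $\beta=(b_0,\ldots,b_n)\in\mathbb Z^{n+1}$ with $b_0\le0$, the Morrison–Plesser class $\Phi_\beta\in\mathcal A$ is the image of $D_0^{-b_0}\prod_{i=1}^nD_i^{k-b_i}\in A_k$ for any $k\ge\max_i b_i$ (independent of $k$). For $\mathbf p\in K\cap\bar M$, $$\Psi_{\mathbf p}=\sum_{\beta:\ \sum_{i=0}^nb_i\mathbf v_i=-\mathbf p,\ b_0\le0}\Phi_\beta\prod_{i=1}^na_i^{b_i},$$ a formal Laurent series in the variables $a_1,\ldots,a_n$ with coefficients in $\mathcal A$; $D_j$ acts coefficientwise. *)

theory Defs
  imports "HOL-Analysis.Analysis" "HOL-Library.Poly_Mapping"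
begin

text \<open>M = Z^d is modelled as the integer points of real^'d; the ray generators
  are v 1, ..., v n; a cone of the simplicial fan is recorded by the set of
  indices of its rays.\<close>

definition lattice_pt :: "real^'d \<Rightarrow> bool" where
  "lattice_pt x \<longleftrightarrow> (\<forall>j. x $ j \<in> \<int>)"

definition cone_of :: "(nat \<Rightarrow> real^'d) \<Rightarrow> nat set \<Rightarrow> (real^'d) set" where
  "cone_of v \<sigma> = {(\<Sum>i\<in>\<sigma>. c i *\<^sub>R v i) | c. \<forall>i\<in>\<sigma>. 0 \<le> c i}"

definition primitive :: "real^'d \<Rightarrow> bool" where
  "primitive x \<longleftrightarrow> lattice_pt x \<and> x \<noteq> 0 \<and>
     (\<forall>t::real. 0 < t \<and> t < 1 \<longrightarrow> \<not> lattice_pt (t *\<^sub>R x))"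

definition complete_simplicial_fan ::
    "nat \<Rightarrow> (nat \<Rightarrow> real^'d) \<Rightarrow> nat set set \<Rightarrow> bool" where
  "complete_simplicial_fan n v S \<longleftrightarrow>
     (\<forall>\<sigma>\<in>S. \<sigma> \<subseteq> {1..n} \<and> inj_on v \<sigma> \<and> independent (v ` \<sigma>)) \<and>
     (\<forall>\<sigma>\<in>S. \<forall>\<tau>. \<tau> \<subseteq> \<sigma> \<longrightarrow> \<tau> \<in> S) \<and>
     (\<forall>i\<in>{1..n}. {i} \<in> S \<and> primitive (v i)) \<and>
     (\<forall>\<sigma>\<in>S. \<forall>\<tau>\<in>S. cone_of v \<sigma> \<inter> cone_of v \<tau> = cone_of v (\<sigma> \<inter> \<tau>)) \<and>
     (\<Union>\<sigma>\<in>S. cone_of v \<sigma>) = UNIV"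

text \<open>Nefness of the anticanonical divisor -K = D_1 + ... + D_n (toric criterion:
  convexity of the support function, i.e. for every maximal cone sigma the linear
  function equal to 1 on the rays of sigma is at most 1 on all ray generators).\<close>
definition nef_Fano :: "nat \<Rightarrow> (nat \<Rightarrow> real^'d) \<Rightarrow> nat set set \<Rightarrow> bool" where
  "nef_Fano n v S \<longleftrightarrow>
     (\<forall>\<sigma>\<in>S. (\<forall>\<tau>\<in>S. \<sigma> \<subseteq> \<tau> \<longrightarrow> \<tau> = \<sigma>) \<longrightarrow>
        (\<exists>l::real^'d. (\<forall>i\<in>\<sigma>. l \<bullet> v i = 1) \<and> (\<forall>i\<in>{1..n}. l \<bullet> v i \<le> 1)))"

type_synonym cpoly = "(nat \<Rightarrow>\<^sub>0 nat) \<Rightarrow>\<^sub>0 complex"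

definition Dvar :: "nat \<Rightarrow> cpoly" where
  "Dvar i = Poly_Mapping.single (Poly_Mapping.single i 1) 1"

definition Dj :: "nat \<Rightarrow> nat \<Rightarrow> cpoly" where
  "Dj n j = (if j = 0 then - (\<Sum>i\<in>{1..n}. Dvar i) else Dvar j)"

inductive_set gen_ideal :: "'a::comm_ring_1 set \<Rightarrow> 'a set" for G where
  zero: "0 \<in> gen_ideal G"
| step: "g \<in> G \<Longrightarrow> x \<in> gen_ideal G \<Longrightarrow> q * g + x \<in> gen_ideal G"

text \<open>Generators of the kernel of C[D_1..D_n] -> A_k.\<close>
definition ideal_k :: "nat \<Rightarrow> (nat \<Rightarrow> real^'d) \<Rightarrow> nat set set \<Rightarrow> nat \<Rightarrow> cpoly set" where
  "ideal_k n v S k = gen_ideal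
     ({(\<Sum>i\<in>{1..n}. Poly_Mapping.single 0 (complex_of_real (l \<bullet> v i)) * Dvar i) | l::real^'d. lattice_pt l} \<union>
      {(\<Prod>i\<in>{1..n}. Dvar i ^ r i) | r::nat \<Rightarrow> nat.
          \<not> (\<exists>\<sigma>\<in>S. \<forall>i\<in>{1..n}. k < r i \<longrightarrow> v i \<in> cone_of v \<sigma>)})"

text \<open>Equality in the direct limit: (k,f) with f representing a class of A_k.\<close>
definition lim_eq :: "nat \<Rightarrow> (nat \<Rightarrow> real^'d) \<Rightarrow> nat set set \<Rightarrow> nat \<times> cpoly \<Rightarrow> nat \<times> cpoly \<Rightarrow> bool" where
  "lim_eq n v S x y \<longleftrightarrow> (\<exists>m. fst x \<le> m \<and> fst y \<le> m \<and>
     (\<Prod>i\<in>{1..n}. Dvar i) ^ (m - fst x) * snd x - (\<Prod>i\<in>{1..n}. Dvar i) ^ (m - fst y) * snd y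
       \<in> ideal_k n v S m)"

text \<open>Elements of the direct limit \<A> are equivalence classes of pairs (k, f).\<close>
type_synonym Aelem = "(nat \<times> cpoly) set"

definition Acls :: "nat \<Rightarrow> (nat \<Rightarrow> real^'d) \<Rightarrow> nat set set \<Rightarrow> nat \<Rightarrow> cpoly \<Rightarrow> Aelem" where
  "Acls n v S k f = {y. lim_eq n v S (k, f) y}"

definition Aact :: "nat \<Rightarrow> (nat \<Rightarrow> real^'d) \<Rightarrow> nat set set \<Rightarrow> cpoly \<Rightarrow> Aelem \<Rightarrow> Aelem" where
  "Aact n v S c X = {y. \<exists>x\<in>X. lim_eq n v S (fst x, c * snd x) y}"

text \<open>Phi_beta for beta = (b0, b 1, ..., b n), b0 \<le> 0, represented in A_k with
  k = max(0, b 1, ..., b n).\<close>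
definition Phi :: "nat \<Rightarrow> (nat \<Rightarrow> real^'d) \<Rightarrow> nat set set \<Rightarrow> int \<Rightarrow> (nat \<Rightarrow> int) \<Rightarrow> Aelem" where
  "Phi n v S b0 b = (let k = Max (insert 0 (b ` {1..n})) in
     Acls n v S (nat k) (Dj n 0 ^ nat (- b0) * (\<Prod>i\<in>{1..n}. Dvar i ^ nat (k - b i))))"

definition vb :: "(nat \<Rightarrow> real^'d) \<Rightarrow> nat \<Rightarrow> (real^'d) \<times> real" where
  "vb v i = (if i = 0 then (0, 1) else (v i, 1))"

definition Kcone :: "nat \<Rightarrow> (nat \<Rightarrow> real^'d) \<Rightarrow> ((real^'d) \<times> real) set" where
  "Kcone n v = {(\<Sum>i\<in>{0..n}. c i *\<^sub>R vb v i) | c. \<forall>i\<in>{0..n}. 0 \<le> c i}"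

definition Mbar_pt :: "(real^'d) \<times> real \<Rightarrow> bool" where
  "Mbar_pt p \<longleftrightarrow> lattice_pt (fst p) \<and> snd p \<in> \<int>"

definition admissible :: "nat \<Rightarrow> (nat \<Rightarrow> real^'d) \<Rightarrow> (real^'d) \<times> real \<Rightarrow> int \<Rightarrow> (nat \<Rightarrow> int) \<Rightarrow> bool" where
  "admissible n v p b0 b \<longleftrightarrow> b0 \<le> 0 \<and>
     (\<Sum>i\<in>{0..n}. of_int ((b(0 := b0)) i) *\<^sub>R vb v i) = - p"

text \<open>Psi_p as a formal Laurent series: its coefficient of a_1^{b 1}...a_n^{b n}
  (only b on {1..n} matters).  For given b there is at most one admissible b0.\<close>
definition Psi :: "nat \<Rightarrow> (nat \<Rightarrow> real^'d) \<Rightarrow> nat set set \<Rightarrow> (real^'d) \<times> real \<Rightarrow> (nat \<Rightarrow> int) \<Rightarrow> Aelem" where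
  "Psi n v S p b = (if \<exists>b0. admissible n v p b0 b
      then Phi n v S (THE b0. admissible n v p b0 b) b
      else Acls n v S 0 0)"

definition series_D :: "nat \<Rightarrow> (nat \<Rightarrow> real^'d) \<Rightarrow> nat set set \<Rightarrow> nat \<Rightarrow>
    ((nat \<Rightarrow> int) \<Rightarrow> Aelem) \<Rightarrow> (nat \<Rightarrow> int) \<Rightarrow> Aelem" where
  "series_D n v S j F = (\<lambda>b. Aact n v S (Dj n j) (F b))"

definition series_a :: "nat \<Rightarrow> ((nat \<Rightarrow> int) \<Rightarrow> Aelem) \<Rightarrow> (nat \<Rightarrow> int) \<Rightarrow> Aelem" where
  "series_a j F = (\<lambda>b. if j = 0 then F b else F (b(j := b j - 1)))"

end

theory Submission
  imports Defs
begin


lemma gen_ideal_gen: "g \<in> G \<Longrightarrow> g \<in> gen_ideal G"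
  using gen_ideal.step[of g G 0 1, OF _ gen_ideal.zero] by simp

lemma gen_ideal_mult: "x \<in> gen_ideal G \<Longrightarrow> c * x \<in> gen_ideal G"
proof (induction rule: gen_ideal.induct)
  case zero then show ?case by (simp add: gen_ideal.zero)
next
  case (step g x q)
  have "c * (q * g + x) = (c * q) * g + c * x" by (simp add: algebra_simps)
  then show ?case using step gen_ideal.step by metis
qed

lemma gen_ideal_add: "x \<in> gen_ideal G \<Longrightarrow> y \<in> gen_ideal G \<Longrightarrow> x + y \<in> gen_ideal G"
proof (induction rule: gen_ideal.induct)
  case zero then show ?case by simp
next
  case (step g x q)
  have "q * g + x + y = q * g + (x + y)" by (simp add: algebra_simps)
  then show ?case using step gen_ideal.step by metis
qed

lemma gen_ideal_neg: "x \<in> gen_ideal G \<Longrightarrow> - x \<in> gen_ideal G"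
  using gen_ideal_mult[of x G "-1"] by simp

lemma gen_ideal_diff: "x \<in> gen_ideal G \<Longrightarrow> y \<in> gen_ideal G \<Longrightarrow> x - y \<in> gen_ideal G"
  using gen_ideal_add[OF _ gen_ideal_neg] by (metis diff_conv_add_uminus)

abbreviation PP :: "nat \<Rightarrow> cpoly" where "PP n \<equiv> (\<Prod>i\<in>{1..n}. Dvar i)"

lemma ideal_k_mult: "x \<in> ideal_k n v S m \<Longrightarrow> c * x \<in> ideal_k n v S m"
  unfolding ideal_k_def by (rule gen_ideal_mult)
lemma ideal_k_add: "x \<in> ideal_k n v S m \<Longrightarrow> y \<in> ideal_k n v S m \<Longrightarrow> x + y \<in> ideal_k n v S m"
  unfolding ideal_k_def by (rule gen_ideal_add)
lemma ideal_k_diff: "x \<in> ideal_k n v S m \<Longrightarrow> y \<in> ideal_k n v S m \<Longrightarrow> x - y \<in> ideal_k n v S m"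
  unfolding ideal_k_def by (rule gen_ideal_diff)
lemma ideal_k_neg: "x \<in> ideal_k n v S m \<Longrightarrow> - x \<in> ideal_k n v S m"
  unfolding ideal_k_def by (rule gen_ideal_neg)
lemma ideal_k_zero: "0 \<in> ideal_k n v S m"
  unfolding ideal_k_def by (rule gen_ideal.zero)

lemma ideal_k_shift:
  assumes "x \<in> ideal_k n v S m"
  shows "PP n ^ l * x \<in> ideal_k n v S (m + l)"
proof -
  let ?G = "\<lambda>m. ({(\<Sum>i\<in>{1..n}. Poly_Mapping.single 0 (complex_of_real (l \<bullet> v i)) * Dvar i) | l::real^'a. lattice_pt l} \<union>
      {(\<Prod>i\<in>{1..n}. Dvar i ^ r i) | r::nat \<Rightarrow> nat.
          \<not> (\<exists>\<sigma>\<in>S. \<forall>i\<in>{1..n}. m < r i \<longrightarrow> v i \<in> cone_of v \<sigma>)})"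
  have gen: "PP n ^ l * g \<in> gen_ideal (?G (m + l))" if "g \<in> ?G m" for g
  proof -
    from that show ?thesis
    proof
      assume "g \<in> {(\<Sum>i\<in>{1..n}. Poly_Mapping.single 0 (complex_of_real (l \<bullet> v i)) * Dvar i) | l::real^'a. lattice_pt l}"
      then have "g \<in> ?G (m + l)" by blast
      then show ?thesis by (intro gen_ideal_mult gen_ideal_gen)
    next
      assume "g \<in> {(\<Prod>i\<in>{1..n}. Dvar i ^ r i) | r::nat \<Rightarrow> nat.
          \<not> (\<exists>\<sigma>\<in>S. \<forall>i\<in>{1..n}. m < r i \<longrightarrow> v i \<in> cone_of v \<sigma>)}"
      then obtain r where g: "g = (\<Prod>i\<in>{1..n}. Dvar i ^ r i)"
        and nr: "\<not> (\<exists>\<sigma>\<in>S. \<forall>i\<in>{1..n}. m < r i \<longrightarrow> v i \<in> cone_of v \<sigma>)" by blast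
      have "PP n ^ l * g = (\<Prod>i\<in>{1..n}. Dvar i ^ (r i + l))"
        unfolding g by (simp add: prod_power_distrib prod.distrib[symmetric] power_add mult.commute)
      moreover have "\<not> (\<exists>\<sigma>\<in>S. \<forall>i\<in>{1..n}. m + l < r i + l \<longrightarrow> v i \<in> cone_of v \<sigma>)"
        using nr by simp
      ultimately have "PP n ^ l * g \<in> ?G (m + l)"
        by (intro UnI2 CollectI exI[of _ "\<lambda>i. r i + l"] conjI) simp_all
      then show ?thesis by (rule gen_ideal_gen)
    qed
  qed
  have "x \<in> gen_ideal (?G m)" using assms unfolding ideal_k_def .
  then have "PP n ^ l * x \<in> gen_ideal (?G (m + l))"
  proof (induction rule: gen_ideal.induct)
    case zero then show ?case by (simp add: gen_ideal.zero)
  next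
    case (step g x q)
    have "PP n ^ l * (q * g + x) = q * (PP n ^ l * g) + PP n ^ l * x" by (simp add: algebra_simps)
    then show ?case using gen[OF step(1)] step.IH by (simp add: gen_ideal_add gen_ideal_mult)
  qed
  then show ?thesis unfolding ideal_k_def .
qed

lemma ideal_k_mono:
  assumes "x \<in> ideal_k n v S m" "m \<le> m'"
  shows "PP n ^ (m' - m) * x \<in> ideal_k n v S m'"
  using ideal_k_shift[OF assms(1), of "m' - m"] assms(2) by simp

lemma lim_eq_mono:
  assumes "fst x \<le> m" "fst y \<le> m" "m \<le> m'"
    "PP n ^ (m - fst x) * snd x - PP n ^ (m - fst y) * snd y \<in> ideal_k n v S m"
  shows "PP n ^ (m' - fst x) * snd x - PP n ^ (m' - fst y) * snd y \<in> ideal_k n v S m'"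
proof -
  have "PP n ^ (m' - m) * (PP n ^ (m - fst x) * snd x - PP n ^ (m - fst y) * snd y) \<in> ideal_k n v S m'"
    by (rule ideal_k_mono[OF assms(4) assms(3)])
  moreover have "PP n ^ (m' - m) * (PP n ^ (m - fst x) * snd x - PP n ^ (m - fst y) * snd y)
     = PP n ^ (m' - fst x) * snd x - PP n ^ (m' - fst y) * snd y"
  proof -
    have a: "m' - fst x = (m' - m) + (m - fst x)" "m' - fst y = (m' - m) + (m - fst y)" using assms by auto
    show ?thesis unfolding a power_add by (simp add: algebra_simps)
  qed
  ultimately show ?thesis by simp
qed

lemma lim_eq_refl: "lim_eq n v S x x"
  unfolding lim_eq_def by (auto intro!: exI[of _ "fst x"] simp: ideal_k_zero)

lemma lim_eq_sym: "lim_eq n v S x y \<Longrightarrow> lim_eq n v S y x"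
  unfolding lim_eq_def using ideal_k_neg by fastforce

lemma lim_eq_trans:
  assumes "lim_eq n v S x y" "lim_eq n v S y z"
  shows "lim_eq n v S x z"
proof -
  obtain m1 where m1: "fst x \<le> m1" "fst y \<le> m1"
    "PP n ^ (m1 - fst x) * snd x - PP n ^ (m1 - fst y) * snd y \<in> ideal_k n v S m1"
    using assms(1) unfolding lim_eq_def by blast
  obtain m2 where m2: "fst y \<le> m2" "fst z \<le> m2"
    "PP n ^ (m2 - fst y) * snd y - PP n ^ (m2 - fst z) * snd z \<in> ideal_k n v S m2"
    using assms(2) unfolding lim_eq_def by blast
  let ?m = "max m1 m2"
  have A: "PP n ^ (?m - fst x) * snd x - PP n ^ (?m - fst y) * snd y \<in> ideal_k n v S ?m"
    by (rule lim_eq_mono[OF m1(1,2) _ m1(3)]) simp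
  have B: "PP n ^ (?m - fst y) * snd y - PP n ^ (?m - fst z) * snd z \<in> ideal_k n v S ?m"
    by (rule lim_eq_mono[OF m2(1,2) _ m2(3)]) simp
  have "PP n ^ (?m - fst x) * snd x - PP n ^ (?m - fst z) * snd z \<in> ideal_k n v S ?m"
    using ideal_k_add[OF A B] by simp
  then show ?thesis unfolding lim_eq_def using m1 m2 by (intro exI[of _ ?m]) auto
qed

lemma lim_eq_mult:
  assumes "lim_eq n v S x y"
  shows "lim_eq n v S (fst x, c * snd x) (fst y, c * snd y)"
proof -
  obtain m where m: "fst x \<le> m" "fst y \<le> m"
    "PP n ^ (m - fst x) * snd x - PP n ^ (m - fst y) * snd y \<in> ideal_k n v S m"
    using assms unfolding lim_eq_def by blast
  have "c * (PP n ^ (m - fst x) * snd x - PP n ^ (m - fst y) * snd y) \<in> ideal_k n v S m"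
    by (rule ideal_k_mult[OF m(3)])
  then show ?thesis unfolding lim_eq_def using m by (intro exI[of _ m]) (simp add: algebra_simps)
qed

lemma Acls_eq:
  assumes "lim_eq n v S (k, f) (k', f')"
  shows "Acls n v S k f = Acls n v S k' f'"
  unfolding Acls_def using assms lim_eq_sym lim_eq_trans by blast

lemma Aact_Acls: "Aact n v S c (Acls n v S k f) = Acls n v S k (c * f)"
proof -
  have "lim_eq n v S (k, c * f) y" if "lim_eq n v S (k, f) x" "lim_eq n v S (fst x, c * snd x) y" for x y
    using lim_eq_trans[OF lim_eq_mult[OF that(1), of c] that(2)] by simp
  moreover have "\<exists>x. lim_eq n v S (k, f) x \<and> lim_eq n v S (fst x, c * snd x) y"
    if "lim_eq n v S (k, c * f) y" for y
    using that lim_eq_refl by (intro exI[of _ "(k,f)"]) auto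
  ultimately show ?thesis unfolding Aact_def Acls_def by auto
qed



lemma sum_pair_split:
  fixes f :: "nat \<Rightarrow> 'a::comm_monoid_add" and g :: "nat \<Rightarrow> 'b::comm_monoid_add"
  shows "(\<Sum>i\<in>A. (f i, g i)) = (\<Sum>i\<in>A. f i, \<Sum>i\<in>A. g i)"
  by (simp add: prod_eq_iff fst_sum snd_sum)

lemma adm_iff:
  "admissible n v p b0 b \<longleftrightarrow> b0 \<le> 0 \<and> (\<Sum>i\<in>{1..n}. of_int (b i) *\<^sub>R v i) = - fst p
     \<and> of_int b0 + (\<Sum>i\<in>{1..n}. (of_int (b i)::real)) = - snd p"
proof -
  have s: "{0..n} = insert 0 {1..n}" by auto
  have "(\<Sum>i\<in>{1..n}. of_int ((b(0:=b0)) i) *\<^sub>R vb v i) = (\<Sum>i\<in>{1..n}. (of_int (b i) *\<^sub>R v i, (of_int (b i)::real)))"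
    by (rule sum.cong) (auto simp: vb_def)
  then have "(\<Sum>i\<in>{0..n}. of_int ((b(0:=b0)) i) *\<^sub>R vb v i)
      = (\<Sum>i\<in>{1..n}. of_int (b i) *\<^sub>R v i, of_int b0 + (\<Sum>i\<in>{1..n}. (of_int (b i)::real)))"
    unfolding s by (simp add: sum_pair_split vb_def)
  then show ?thesis unfolding admissible_def by (auto simp: prod_eq_iff)
qed

lemma adm_unique: "admissible n v p b0 b \<Longrightarrow> admissible n v p b0' b \<Longrightarrow> b0 = b0'"
  unfolding adm_iff by simp

lemma sum_upd_R:
  fixes w :: "nat \<Rightarrow> 'a::real_vector"
  assumes "j \<in> A" "finite A"
  shows "(\<Sum>i\<in>A. of_int ((b(j := b j - 1)) i) *\<^sub>R w i) = (\<Sum>i\<in>A. of_int (b i) *\<^sub>R w i) - w j"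
proof -
  have "(\<Sum>i\<in>A. of_int ((b(j := b j - 1)) i) *\<^sub>R w i) = (\<Sum>i\<in>A. of_int (b i) *\<^sub>R w i - (if i = j then w i else 0))"
    by (rule sum.cong) (auto simp: algebra_simps)
  also have "\<dots> = (\<Sum>i\<in>A. of_int (b i) *\<^sub>R w i) - w j"
    using assms by (simp add: sum_subtractf)
  finally show ?thesis .
qed

lemma adm_shift_j:
  assumes "j \<in> {1..n}"
  shows "admissible n v (p + vb v j) b0 (b(j := b j - 1)) \<longleftrightarrow> admissible n v p b0 b"
proof -
  have 1: "(\<Sum>i\<in>{1..n}. of_int ((b(j := b j - 1)) i) *\<^sub>R v i) = (\<Sum>i\<in>{1..n}. of_int (b i) *\<^sub>R v i) - v j"
    using sum_upd_R[OF assms, of b v] by simp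
  have 2: "(\<Sum>i\<in>{1..n}. (of_int ((b(j := b j - 1)) i) :: real)) = (\<Sum>i\<in>{1..n}. of_int (b i)) - 1"
    using sum_upd_R[OF assms, of b "\<lambda>_. (1::real)"] by simp
  have vj: "vb v j = (v j, 1)" using assms by (simp add: vb_def)
  have e: "(of_int b0 + ((\<Sum>i\<in>{1..n}. (of_int (b i)::real)) - 1) = - snd (p + (v j, 1))) \<longleftrightarrow>
      (of_int b0 + (\<Sum>i\<in>{1..n}. (of_int (b i)::real)) = - snd p)" by auto
  have f: "((\<Sum>i\<in>{1..n}. of_int (b i) *\<^sub>R v i) - v j = - fst (p + (v j, 1))) \<longleftrightarrow>
      ((\<Sum>i\<in>{1..n}. of_int (b i) *\<^sub>R v i) = - fst p)" by (auto simp: algebra_simps)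
  show ?thesis unfolding adm_iff 1 2 vj e f ..
qed

lemma adm_shift_0:
  "admissible n v (p + vb v 0) b0 b \<longleftrightarrow> b0 \<le> 0 \<and> (\<Sum>i\<in>{1..n}. of_int (b i) *\<^sub>R v i) = - fst p
     \<and> of_int b0 + (\<Sum>i\<in>{1..n}. (of_int (b i)::real)) = - snd p - 1"
  unfolding adm_iff vb_def by (intro conj_cong refl) (auto simp: algebra_simps)


lemma cone_empty: "cone_of v {} = {0}"
  unfolding cone_of_def by auto

lemma cone_single: "v i \<in> cone_of v {i}"
  unfolding cone_of_def by (auto intro!: exI[of _ "\<lambda>_. 1"])

lemma vanish:
  fixes v :: "nat \<Rightarrow> real^'d"
  assumes fan: "complete_simplicial_fan n v S" and nef: "nef_Fano n v S" and pK: "p \<in> Kcone n v"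
    and eq1: "(\<Sum>i\<in>{1..n}. of_int (b i) *\<^sub>R v i) = - fst p"
    and eq2: "(\<Sum>i\<in>{1..n}. (of_int (b i)::real)) = - snd p - 1"
    and sS: "\<sigma> \<in> S" and hs: "\<forall>i\<in>{1..n}. b i < 0 \<longrightarrow> v i \<in> cone_of v \<sigma>"
  shows False
proof -
  note F = fan[unfolded complete_simplicial_fan_def]
  note F1 = conjunct1[OF F]
  note F3 = conjunct1[OF conjunct2[OF conjunct2[OF F]]]
  note F4 = conjunct1[OF conjunct2[OF conjunct2[OF conjunct2[OF F]]]]
  have Ssub: "\<And>\<sigma>. \<sigma> \<in> S \<Longrightarrow> \<sigma> \<subseteq> {1..n}" using F1 by blast
  have sing: "\<And>i. i \<in> {1..n} \<Longrightarrow> {i} \<in> S \<and> primitive (v i)" using F3 by blast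
  have inter: "\<And>\<sigma> \<tau>. \<sigma> \<in> S \<Longrightarrow> \<tau> \<in> S \<Longrightarrow> cone_of v \<sigma> \<inter> cone_of v \<tau> = cone_of v (\<sigma> \<inter> \<tau>)"
    using F4 by blast
  have "S \<subseteq> Pow {1..n}" using Ssub by blast
  then have finS: "finite S" by (rule finite_subset) simp
  obtain \<tau> where t: "\<tau> \<in> {\<tau>\<in>S. \<sigma> \<subseteq> \<tau>}" "\<sigma> \<subseteq> \<tau>" "\<forall>c\<in>{\<tau>\<in>S. \<sigma> \<subseteq> \<tau>}. \<tau> \<le> c \<longrightarrow> \<tau> = c"
    using finite_has_maximal2[of "{\<tau>\<in>S. \<sigma> \<subseteq> \<tau>}" \<sigma>] finS sS by auto
  have tS: "\<tau> \<in> S" using t by simp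
  have tmax: "\<forall>\<tau>'\<in>S. \<tau> \<subseteq> \<tau>' \<longrightarrow> \<tau>' = \<tau>" using t by auto
  obtain l :: "real^'d" where l1: "\<forall>i\<in>\<tau>. l \<bullet> v i = 1" and l2: "\<forall>i\<in>{1..n}. l \<bullet> v i \<le> 1"
    using nef tS tmax unfolding nef_Fano_def by blast
  have ins: "i \<in> \<sigma>" if "i \<in> {1..n}" "b i < 0" for i
  proof (rule ccontr)
    assume "i \<notin> \<sigma>"
    then have e: "{i} \<inter> \<sigma> = {}" by auto
    have "v i \<in> cone_of v {i} \<inter> cone_of v \<sigma>" using cone_single hs that by auto
    then have "v i = 0" using inter[of "{i}" \<sigma>] sing[OF that(1)] sS e cone_empty by auto
    moreover have "v i \<noteq> 0" using sing[OF that(1)] unfolding primitive_def by blast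
    ultimately show False by simp
  qed
  obtain c where c0: "\<forall>i\<in>{0..n}. 0 \<le> c i" and pc: "p = (\<Sum>i\<in>{0..n}. c i *\<^sub>R vb v i)"
    using pK unfolding Kcone_def by blast
  have fp: "fst p = (\<Sum>i\<in>{0..n}. c i *\<^sub>R fst (vb v i))" unfolding pc by (simp add: fst_sum)
  have sp: "snd p = (\<Sum>i\<in>{0..n}. c i)" unfolding pc snd_sum by (rule sum.cong) (auto simp: vb_def)
  have "l \<bullet> fst p = (\<Sum>i\<in>{0..n}. c i * (l \<bullet> fst (vb v i)))"
    unfolding fp by (simp add: inner_sum_right)
  also have "\<dots> \<le> (\<Sum>i\<in>{0..n}. c i)"
  proof (rule sum_mono)
    fix i assume i: "i \<in> {0..n}"
    have "l \<bullet> fst (vb v i) \<le> 1" using l2 i by (cases "i = 0") (auto simp: vb_def)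
    then show "c i * (l \<bullet> fst (vb v i)) \<le> c i" using c0 i by (simp add: mult_left_le)
  qed
  finally have A: "l \<bullet> fst p \<le> snd p" using sp by simp
  have C: "l \<bullet> fst p = - (\<Sum>i\<in>{1..n}. of_int (b i) * (l \<bullet> v i))"
  proof -
    have "l \<bullet> (\<Sum>i\<in>{1..n}. of_int (b i) *\<^sub>R v i) = (\<Sum>i\<in>{1..n}. of_int (b i) * (l \<bullet> v i))"
      by (simp add: inner_sum_right)
    then show ?thesis unfolding eq1 by simp
  qed
  have B: "(\<Sum>i\<in>{1..n}. of_int (b i) * (l \<bullet> v i)) \<le> (\<Sum>i\<in>{1..n}. (of_int (b i)::real))"
  proof (rule sum_mono)
    fix i assume i: "i \<in> {1..n}"
    show "of_int (b i) * (l \<bullet> v i) \<le> (of_int (b i)::real)"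
    proof (cases "b i < 0")
      case True
      then have "l \<bullet> v i = 1" using ins[OF i True] t(2) l1 by auto
      then show ?thesis by simp
    next
      case False
      then show ?thesis using l2 i by (simp add: mult_left_le)
    qed
  qed
  show False using A B C eq2 by linarith
qed



lemma Max_facts:
  fixes b :: "nat \<Rightarrow> int"
  shows "0 \<le> Max (insert 0 (b ` {1..n}))" "i \<in> {1..n} \<Longrightarrow> b i \<le> Max (insert 0 (b ` {1..n}))"
  by (rule Max_ge; simp)+

lemma prod_bump:
  assumes "j \<in> A" "finite A"
  shows "Dvar j * (\<Prod>i\<in>A. Dvar i ^ e i) = (\<Prod>i\<in>A. Dvar i ^ (e i + (if i = j then 1 else 0)))"
proof -
  have "(\<Prod>i\<in>A. Dvar i ^ (e i + (if i = j then 1 else 0)))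
      = (\<Prod>i\<in>A. Dvar i ^ e i) * (\<Prod>i\<in>A. (if i = j then Dvar i else 1))"
    by (simp add: power_add prod.distrib[symmetric] if_distrib mult.commute cong: if_cong)
  also have "(\<Prod>i\<in>A. (if i = j then Dvar i else 1)) = Dvar j" using assms by (simp add: prod.delta)
  finally show ?thesis by (simp add: mult.commute)
qed

lemma PP_prod: "PP n ^ l * (\<Prod>i\<in>{1..n}. Dvar i ^ e i) = (\<Prod>i\<in>{1..n}. Dvar i ^ (e i + l))"
  by (simp add: prod_power_distrib prod.distrib[symmetric] power_add mult.commute)

lemma Phi_shift_0:
  assumes "b0 \<le> 0"
  shows "Aact n v S (Dj n 0) (Phi n v S b0 b) = Phi n v S (b0 - 1) b"
proof -
  have e: "nat (- (b0 - 1)) = Suc (nat (- b0))" using assms by simp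
  show ?thesis unfolding Phi_def Let_def Aact_Acls e by (simp add: mult.assoc)
qed

lemma Phi_shift_j:
  fixes b :: "nat \<Rightarrow> int"
  assumes j: "j \<in> {1..n}"
  shows "Aact n v S (Dj n j) (Phi n v S b0 b) = Phi n v S b0 (b(j := b j - 1))"
proof -
  define K where "K = Max (insert 0 (b ` {1..n}))"
  define b' where "b' = b(j := b j - 1)"
  define K' where "K' = Max (insert 0 (b' ` {1..n}))"
  have K0: "0 \<le> K" and Kb: "\<And>i. i \<in> {1..n} \<Longrightarrow> b i \<le> K" unfolding K_def by (rule Max_facts)+
  have K'0: "0 \<le> K'" and K'b: "\<And>i. i \<in> {1..n} \<Longrightarrow> b' i \<le> K'" unfolding K'_def by (rule Max_facts)+
  have "b' i \<le> K" if "i \<in> {1..n}" for i using Kb[OF that] by (auto simp: b'_def)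
  then have KK': "K' \<le> K" unfolding K'_def using K0 by (subst Max_le_iff) auto
  have Dj: "Dj n j = Dvar j" using j by (simp add: Dj_def)
  have poly: "Dvar j * (Dj n 0 ^ nat (- b0) * (\<Prod>i\<in>{1..n}. Dvar i ^ nat (K - b i)))
      = PP n ^ (nat K - nat K') * (Dj n 0 ^ nat (- b0) * (\<Prod>i\<in>{1..n}. Dvar i ^ nat (K' - b' i)))"
  proof -
    have "Dvar j * (\<Prod>i\<in>{1..n}. Dvar i ^ nat (K - b i)) = PP n ^ (nat K - nat K') * (\<Prod>i\<in>{1..n}. Dvar i ^ nat (K' - b' i))"
      unfolding prod_bump[OF j finite_atLeastAtMost] PP_prod
    proof (rule prod.cong[OF refl])
      fix i assume i: "i \<in> {1..n}"
      have "nat (K - b i) + (if i = j then 1 else 0) = nat (K' - b' i) + (nat K - nat K')"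
        using Kb[OF i] K'b[OF i] KK' K0 K'0 by (auto simp: b'_def)
      then show "Dvar i ^ (nat (K - b i) + (if i = j then 1 else 0)) = Dvar i ^ (nat (K' - b' i) + (nat K - nat K'))"
        by simp
    qed
    then show ?thesis by (simp add: algebra_simps)
  qed
  have "lim_eq n v S (nat K, Dvar j * (Dj n 0 ^ nat (- b0) * (\<Prod>i\<in>{1..n}. Dvar i ^ nat (K - b i))))
      (nat K', Dj n 0 ^ nat (- b0) * (\<Prod>i\<in>{1..n}. Dvar i ^ nat (K' - b' i)))"
    unfolding lim_eq_def using KK' by (intro exI[of _ "nat K"]) (auto simp only: fst_conv snd_conv poly diff_self power_0 mult_1 ideal_k_zero diff_le_self cancel_comm_monoid_add_class.diff_cancel nat_mono)
  then show ?thesis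
    unfolding Phi_def Let_def Aact_Acls Dj K_def[symmetric] b'_def[symmetric] K'_def[symmetric]
    by (rule Acls_eq)
qed

lemma Phi_vanish:
  fixes v :: "nat \<Rightarrow> real^'d"
  assumes fan: "complete_simplicial_fan n v S" and nef: "nef_Fano n v S" and pK: "p \<in> Kcone n v"
    and eq1: "(\<Sum>i\<in>{1..n}. of_int (b i) *\<^sub>R v i) = - fst p"
    and eq2: "(\<Sum>i\<in>{1..n}. (of_int (b i)::real)) = - snd p - 1"
  shows "Phi n v S 0 b = Acls n v S 0 0"
proof -
  define K where "K = Max (insert 0 (b ` {1..n}))"
  have K0: "0 \<le> K" and Kb: "\<And>i. i \<in> {1..n} \<Longrightarrow> b i \<le> K" unfolding K_def by (rule Max_facts)+
  have nc: "\<not> (\<exists>\<sigma>\<in>S. \<forall>i\<in>{1..n}. nat K < nat (K - b i) \<longrightarrow> v i \<in> cone_of v \<sigma>)"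
  proof
    assume "\<exists>\<sigma>\<in>S. \<forall>i\<in>{1..n}. nat K < nat (K - b i) \<longrightarrow> v i \<in> cone_of v \<sigma>"
    then obtain \<sigma> where s: "\<sigma> \<in> S" and h: "\<forall>i\<in>{1..n}. nat K < nat (K - b i) \<longrightarrow> v i \<in> cone_of v \<sigma>" by blast
    have "\<forall>i\<in>{1..n}. b i < 0 \<longrightarrow> v i \<in> cone_of v \<sigma>"
      using h K0 by auto
    then show False using vanish[OF fan nef pK eq1 eq2 s] by blast
  qed
  have mem: "(\<Prod>i\<in>{1..n}. Dvar i ^ nat (K - b i)) \<in> ideal_k n v S (nat K)"
    unfolding ideal_k_def
    by (rule gen_ideal_gen, rule UnI2, rule CollectI, rule exI[of _ "\<lambda>i. nat (K - b i)"]) (use nc in simp)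
  have "lim_eq n v S (nat K, Dj n 0 ^ nat (- 0) * (\<Prod>i\<in>{1..n}. Dvar i ^ nat (K - b i))) (0, 0)"
    unfolding lim_eq_def using mem by (intro exI[of _ "nat K"]) simp
  then show ?thesis unfolding Phi_def Let_def K_def[symmetric] by (rule Acls_eq)
qed



lemma Aact_zero: "Aact n v S c (Acls n v S 0 0) = Acls n v S 0 0"
  by (simp add: Aact_Acls)

theorem proposition3p4:
  fixes n :: nat and v :: "nat \<Rightarrow> real^'d" and S :: "nat set set"
    and p :: "(real^'d) \<times> real" and j :: nat
  assumes "complete_simplicial_fan n v S"
    and "nef_Fano n v S"
    and "p \<in> Kcone n v" and "Mbar_pt p"
    and "j \<in> {0..n}"
  shows "\<forall>b::nat \<Rightarrow> int. (\<forall>i. i \<notin> {1..n} \<longrightarrow> b i = 0) \<longrightarrow>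
    series_D n v S j (Psi n v S p) b = series_a j (Psi n v S (p + vb v j)) b"
proof (intro allI impI)
  fix b :: "nat \<Rightarrow> int"
  show "series_D n v S j (Psi n v S p) b = series_a j (Psi n v S (p + vb v j)) b"
  proof (cases "j = 0")
    case True
    have L: "series_D n v S j (Psi n v S p) b = Aact n v S (Dj n 0) (Psi n v S p b)"
      using True by (simp add: series_D_def)
    have R: "series_a j (Psi n v S (p + vb v j)) b = Psi n v S (p + vb v 0) b"
      using True by (simp add: series_a_def)
    show ?thesis unfolding L R
    proof (cases "\<exists>b0. admissible n v p b0 b")
      case True
      then obtain b0 where a: "admissible n v p b0 b" by blast
      have a': "admissible n v (p + vb v 0) (b0 - 1) b"
        using a[unfolded adm_iff] unfolding adm_shift_0 by auto
      have t1: "(THE b0. admissible n v p b0 b) = b0" using a adm_unique by blast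
      have t2: "(THE b0. admissible n v (p + vb v 0) b0 b) = b0 - 1" using a' adm_unique by blast
      have b0: "b0 \<le> 0" using a unfolding adm_iff by simp
      show "Aact n v S (Dj n 0) (Psi n v S p b) = Psi n v S (p + vb v 0) b"
      proof -
        have P1: "Psi n v S p b = Phi n v S b0 b" unfolding Psi_def t1 using a by auto
        have P2: "Psi n v S (p + vb v 0) b = Phi n v S (b0 - 1) b" unfolding Psi_def t2 using a' by auto
        show ?thesis unfolding P1 P2 by (rule Phi_shift_0[OF b0])
      qed
    next
      case False
      note nF = False
      show "Aact n v S (Dj n 0) (Psi n v S p b) = Psi n v S (p + vb v 0) b"
      proof (cases "\<exists>b0. admissible n v (p + vb v 0) b0 b")
        case True
        then obtain b0 where a': "admissible n v (p + vb v 0) b0 b" by blast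
        have b00: "b0 = 0"
        proof (rule ccontr)
          assume "b0 \<noteq> 0"
          moreover have "b0 \<le> 0" using a'[unfolded adm_shift_0] by simp
          ultimately have "admissible n v p (b0 + 1) b" using a'[unfolded adm_shift_0] unfolding adm_iff by auto
          then show False using nF by blast
        qed
        have t2: "(THE b0. admissible n v (p + vb v 0) b0 b) = 0" using a' b00 adm_unique by blast
        have eqs: "(\<Sum>i\<in>{1..n}. of_int (b i) *\<^sub>R v i) = - fst p"
            "(\<Sum>i\<in>{1..n}. (of_int (b i)::real)) = - snd p - 1"
          using a' b00 unfolding adm_shift_0 by auto
        have "Psi n v S (p + vb v 0) b = Acls n v S 0 0"
          unfolding Psi_def using True t2 Phi_vanish[OF assms(1-3) eqs] by simp
        moreover have "Psi n v S p b = Acls n v S 0 0" unfolding Psi_def using nF by simp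
        ultimately show ?thesis by (simp add: Aact_zero)
      next
        case False
        then show ?thesis unfolding Psi_def using nF by (simp add: Aact_zero)
      qed
    qed
  next
    case False
    then have j: "j \<in> {1..n}" using assms(5) by auto
    have L: "series_D n v S j (Psi n v S p) b = Aact n v S (Dj n j) (Psi n v S p b)"
      by (simp add: series_D_def)
    have R: "series_a j (Psi n v S (p + vb v j)) b = Psi n v S (p + vb v j) (b(j := b j - 1))"
      using False by (simp add: series_a_def)
    show ?thesis unfolding L R
    proof (cases "\<exists>b0. admissible n v p b0 b")
      case True
      then obtain b0 where a: "admissible n v p b0 b" by blast
      have a': "admissible n v (p + vb v j) b0 (b(j := b j - 1))"
        using a adm_shift_j[OF j, of v p b0 b] by simp
      have t1: "(THE b0. admissible n v p b0 b) = b0" using a adm_unique by blast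
      have t2: "(THE b0. admissible n v (p + vb v j) b0 (b(j := b j - 1))) = b0" using a' adm_unique by blast
      show "Aact n v S (Dj n j) (Psi n v S p b) = Psi n v S (p + vb v j) (b(j := b j - 1))"
      proof -
        have P1: "Psi n v S p b = Phi n v S b0 b" unfolding Psi_def t1 using a by auto
        have P2: "Psi n v S (p + vb v j) (b(j := b j - 1)) = Phi n v S b0 (b(j := b j - 1))"
          unfolding Psi_def t2 using a' by auto
        show ?thesis unfolding P1 P2 by (rule Phi_shift_j[OF j])
      qed
    next
      case False
      then have "\<not> (\<exists>b0. admissible n v (p + vb v j) b0 (b(j := b j - 1)))"
        using adm_shift_j[OF j, of v p _ b] by simp
      then show "Aact n v S (Dj n j) (Psi n v S p b) = Psi n v S (p + vb v j) (b(j := b j - 1))"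
        unfolding Psi_def using False by (simp add: Aact_zero)
    qed
  qed
qed


end
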